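(* Under Assumption 1 and given $P(\sigma_{i}=\sigma)=1$, \begin{align*} CD = -\sqrt{\left(T-\frac{T}{N}\right)/2} - \frac{1}{\sqrt{2N}} \left(\frac{1}{\sqrt{NT}} \sum_{i=1}^N \sum_{t=1}^T \left( \frac{\varepsilon_{i,t}^2}{\sigma^{2}}-1\right)\right) + o_P(N^{-1/2}). \end{align*}
   Context: Panel model with additive time effects: $y_{i,t} = \mathbf{x}_{i,t}'\boldsymbol{\beta} + \tau_t + \mu_i + \varepsilon_{i,t}$, with $\boldsymbol{\beta}$, $\mu_i$ and the error variance known (w.l.o.g. $y_{i,t}=\tau_t+\varepsilon_{i,t}$). Time effects are estimated by cross-section averages $\hat\tau_t=\overline{y}_t$, residuals are $\hat\varepsilon_{i,t}=y_{i,t}-\overline{y}_t$, and $CD=\sqrt{\frac{2}{TN(N-1)}}\sum_{i=2}^N\sum_{j=1}^{i-1}\sum_{t=1}^T \hat\varepsilon_{i,t}\hat\varepsilon_{j,t}/(\sigma_i\sigma_j)$. Assumption 1: $\varepsilon_{i,t}=\sigma_i\eta_{i,t}$ with $\eta_{i,t}$ i.i.d. over $i,t$, $\mathbb{E}[\eta_{i,t}]=0$, $\mathbb{E}[\eta_{i,t}^2]=1$, $\mathbb{E}[\eta_{i,t}^8]<M$; $\sigma_i\in[\delta,M]$, i.i.d. over $i$, independent of $\eta_{i,t}$. *)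

theory Defs
  imports "HOL-Probability.Probability"
begin

definition xsec_mean :: "(nat \<Rightarrow> nat \<Rightarrow> real) \<Rightarrow> nat \<Rightarrow> nat \<Rightarrow> real" where
  "xsec_mean y N t = (\<Sum>i=1..N. y i t) / real N"

definition resid :: "(nat \<Rightarrow> nat \<Rightarrow> real) \<Rightarrow> nat \<Rightarrow> nat \<Rightarrow> nat \<Rightarrow> real" where
  "resid y N i t = y i t - xsec_mean y N t"

text \<open>The CD statistic, with known scales s i (= sigma_i).\<close>
definition CD_stat :: "(nat \<Rightarrow> nat \<Rightarrow> real) \<Rightarrow> (nat \<Rightarrow> real) \<Rightarrow> nat \<Rightarrow> nat \<Rightarrow> real" where
  "CD_stat y s N T = sqrt (2 / (real T * real N * (real N - 1))) *
     (\<Sum>i=2..N. \<Sum>j=1..i-1. \<Sum>t=1..T. resid y N i t * resid y N j t / (s i * s j))"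

end

theory Submission
  imports Defs "HOL-Probability.Probability" "HOL-Real_Asymp.Real_Asymp"
begin

lemma (in prob_space) G1:
  fixes X :: "'i \<Rightarrow> 'a \<Rightarrow> real" and f :: "real \<Rightarrow> real" and h :: "('i \<Rightarrow> real) \<Rightarrow> real"
  assumes ind: "indep_vars (\<lambda>_. borel) X UNIV"
    and pA: "p \<notin> A"
    and f[measurable]: "f \<in> borel_measurable borel"
    and h[measurable]: "h \<in> borel_measurable (PiM A (\<lambda>_. borel))"
    and i1: "integrable M (\<lambda>\<omega>. f (X p \<omega>))"
    and i2: "integrable M (\<lambda>\<omega>. h (\<lambda>q\<in>A. X q \<omega>))"
  shows "(\<integral>\<omega>. f (X p \<omega>) * h (\<lambda>q\<in>A. X q \<omega>) \<partial>M) =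
         (\<integral>\<omega>. f (X p \<omega>) \<partial>M) * (\<integral>\<omega>. h (\<lambda>q\<in>A. X q \<omega>) \<partial>M)"
proof -
  have R: "indep_vars (\<lambda>j. PiM (case_bool {p} A j) (\<lambda>_. borel))
          (\<lambda>j \<omega>. restrict (\<lambda>i. X i \<omega>) (case_bool {p} A j)) UNIV"
    by (rule indep_vars_restrict[OF ind]) (auto simp: disjoint_family_on_def pA split: bool.split)
  have "indep_var (PiM {p} (\<lambda>_. borel)) (\<lambda>\<omega>. restrict (\<lambda>i. X i \<omega>) {p})
                       (PiM A (\<lambda>_. borel)) (\<lambda>\<omega>. restrict (\<lambda>i. X i \<omega>) A)"
  proof -
    have e1: "(\<lambda>j. PiM (case_bool {p} A j) (\<lambda>_. borel)) = case_bool (PiM {p} (\<lambda>_. borel)) (PiM A (\<lambda>_. borel))"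
      by (rule ext) (simp split: bool.split)
    have e2: "(\<lambda>j \<omega>. restrict (\<lambda>i. X i \<omega>) (case_bool {p} A j)) = case_bool (\<lambda>\<omega>. restrict (\<lambda>i. X i \<omega>) {p}) (\<lambda>\<omega>. restrict (\<lambda>i. X i \<omega>) A)"
      by (rule ext) (simp split: bool.split)
    show ?thesis using R unfolding indep_var_def e1 e2 .
  qed
  then have "indep_var borel ((\<lambda>v. f (v p)) \<circ> (\<lambda>\<omega>. restrict (\<lambda>i. X i \<omega>) {p}))
                       borel (h \<circ> (\<lambda>\<omega>. restrict (\<lambda>i. X i \<omega>) A))"
    by (rule indep_var_compose) measurable
  then have "indep_var borel (\<lambda>\<omega>. f (X p \<omega>)) borel (\<lambda>\<omega>. h (\<lambda>q\<in>A. X q \<omega>))"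
    by (simp add: comp_def)
  note ii = this
  show ?thesis
    apply (rule indep_var_lebesgue_integral)
    using ii i1 i2 by auto
qed

lemma abs_prod_le_sq: "\<bar>(a::real) * b\<bar> \<le> a^2 + b^2"
proof -
  have "0 \<le> (a-b)^2" "0 \<le> (a+b)^2" "0\<le>a^2" "0\<le>b^2" by simp_all
  then have "0 \<le> a^2 - 2*(a*b) + b^2" "0 \<le> a^2 + 2*(a*b) + b^2" by (simp_all add: power2_diff power2_sum)
  then show ?thesis by linarith
qed

lemma (in prob_space) integrable_prod_sq:
  fixes f g :: "'a \<Rightarrow> real"
  assumes [measurable]: "f \<in> borel_measurable M" "g \<in> borel_measurable M"
    and "integrable M (\<lambda>x. (f x)^2)" "integrable M (\<lambda>x. (g x)^2)"
  shows "integrable M (\<lambda>x. f x * g x)"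
  apply (rule Bochner_Integration.integrable_bound[where f="\<lambda>x. (f x)^2 + (g x)^2"])
  using assms(3,4) apply simp
  apply measurable
  using abs_prod_le_sq by (auto intro!: AE_I2)

lemma (in prob_space) orth_sum:
  fixes Z :: "'k \<Rightarrow> 'a \<Rightarrow> real"
  assumes fin: "finite K" and meas[measurable]: "\<And>k. k\<in>K \<Longrightarrow> Z k \<in> borel_measurable M"
    and sq: "\<And>k. k\<in>K \<Longrightarrow> integrable M (\<lambda>x. (Z k x)^2)"
    and orth: "\<And>k l. k\<in>K \<Longrightarrow> l\<in>K \<Longrightarrow> k\<noteq>l \<Longrightarrow> expectation (\<lambda>x. Z k x * Z l x) = 0"
  shows "integrable M (\<lambda>x. (\<Sum>k\<in>K. Z k x)^2)"
    and "expectation (\<lambda>x. (\<Sum>k\<in>K. Z k x)^2) = (\<Sum>k\<in>K. expectation (\<lambda>x. (Z k x)^2))"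
proof -
  have eq: "(\<lambda>x. (\<Sum>k\<in>K. Z k x)^2) = (\<lambda>x. \<Sum>k\<in>K. \<Sum>l\<in>K. Z k x * Z l x)"
    by (simp add: power2_eq_square sum_product)
  have ip: "integrable M (\<lambda>x. Z k x * Z l x)" if "k\<in>K" "l\<in>K" for k l
    using that by (intro integrable_prod_sq meas sq)
  show "integrable M (\<lambda>x. (\<Sum>k\<in>K. Z k x)^2)"
    unfolding eq by (auto intro!: integrable_sum ip)
  have "expectation (\<lambda>x. (\<Sum>k\<in>K. Z k x)^2) = (\<Sum>k\<in>K. \<Sum>l\<in>K. expectation (\<lambda>x. Z k x * Z l x))"
    unfolding eq using ip by (simp add: integrable_sum)
  also have "\<dots> = (\<Sum>k\<in>K. expectation (\<lambda>x. Z k x * Z k x))"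
  proof (rule sum.cong[OF refl])
    fix k assume k: "k\<in>K"
    have "(\<Sum>l\<in>K. expectation (\<lambda>x. Z k x * Z l x)) = (\<Sum>l\<in>K. if l = k then expectation (\<lambda>x. Z k x * Z k x) else 0)"
      using orth k by (intro sum.cong) auto
    also have "\<dots> = expectation (\<lambda>x. Z k x * Z k x)" using fin k by simp
    finally show "(\<Sum>l\<in>K. expectation (\<lambda>x. Z k x * Z l x)) = expectation (\<lambda>x. Z k x * Z k x)" .
  qed
  finally show "expectation (\<lambda>x. (\<Sum>k\<in>K. Z k x)^2) = (\<Sum>k\<in>K. expectation (\<lambda>x. (Z k x)^2))"
    by (simp add: power2_eq_square)
qed

lemma pairsum:
  fixes f :: "nat \<Rightarrow> real"
  shows "(\<Sum>i=2..N. \<Sum>j=1..i-1. f i * f j) = ((\<Sum>i=1..N. f i)^2 - (\<Sum>i=1..N. (f i)^2)) / 2"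
proof (induction N)
  case 0 then show ?case by simp
next
  case (Suc n)
  show ?case
  proof (cases "n = 0")
    case True then show ?thesis by (simp add: power2_eq_square)
  next
    case False
    have "(\<Sum>i=2..Suc n. \<Sum>j=1..i-1. f i * f j) = (\<Sum>i=2..n. \<Sum>j=1..i-1. f i * f j) + (\<Sum>j=1..n. f (Suc n) * f j)"
      using False by (simp add: sum.atLeast_Suc_atMost_Suc_shift)
    also have "\<dots> = ((\<Sum>i=1..n. f i)^2 - (\<Sum>i=1..n. (f i)^2)) / 2 + f (Suc n) * (\<Sum>j=1..n. f j)"
      by (subst Suc.IH) (simp add: sum_distrib_left)
    also have "\<dots> = ((\<Sum>i=1..Suc n. f i)^2 - (\<Sum>i=1..Suc n. (f i)^2)) / 2"
      by (simp add: power2_eq_square algebra_simps add_divide_distrib diff_divide_distrib)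
    finally show ?thesis .
  qed
qed

lemma s1:
  assumes "2 \<le> N" "1 \<le> T"
  shows "sqrt ((real T - real T / real N) / 2) = sqrt (2 / (real T * real N * (real N - 1))) * (real N - 1) * real T / 2"
proof -
  have N: "real N \<ge> 2" "real T \<ge> 1" using assms by auto
  have B0: "0 \<le> (real N - 1) * real T / 2" using N by simp
  have "sqrt (2 / (real T * real N * (real N - 1)) * ((real N - 1) * real T / 2)^2)
      = sqrt (2 / (real T * real N * (real N - 1))) * ((real N - 1) * real T / 2)"
    by (simp only: real_sqrt_mult real_sqrt_abs abs_of_nonneg[OF B0])
  moreover have "2 / (real T * real N * (real N - 1)) * ((real N - 1) * real T / 2)^2 = (real T - real T / real N) / 2"
    using N by (simp add: field_simps power2_eq_square)
  ultimately have "sqrt ((real T - real T / real N) / 2) = sqrt (2 / (real T * real N * (real N - 1))) * ((real N - 1) * real T / 2)"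
    by metis
  then show ?thesis by simp
qed

lemma s2:
  assumes "1 \<le> N" "1 \<le> T"
  shows "1 / sqrt (2 * real N) * (1 / sqrt (real N * real T) * X) = X / (real N * sqrt (2 * real T))"
proof -
  have "sqrt (2 * real N) * sqrt (real N * real T) = sqrt ((real N)^2 * (2 * real T))"
    by (simp add: real_sqrt_mult[symmetric] algebra_simps power2_eq_square)
  also have "\<dots> = real N * sqrt (2 * real T)" by (simp add: real_sqrt_mult)
  finally have "sqrt (2 * real N) * sqrt (real N * real T) = real N * sqrt (2 * real T)" .
  then show ?thesis by (simp add: field_simps)
qed

definition aco :: "nat \<Rightarrow> nat \<Rightarrow> real" where
  "aco N T = 1 / (real N * sqrt (2 * real T)) - sqrt (2 / (real T * real N * (real N - 1))) * (real N - 1) / (2 * real N)"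
definition bco :: "nat \<Rightarrow> nat \<Rightarrow> real" where
  "bco N T = sqrt (2 / (real T * real N * (real N - 1))) / real N"

lemma alg:
  fixes e :: "nat \<Rightarrow> nat \<Rightarrow> real" and \<sigma> :: real
  assumes N: "2 \<le> N" and T: "1 \<le> T" and \<sigma>: "\<sigma> \<noteq> 0"
  shows "CD_stat (\<lambda>i t. \<tau> t + \<sigma> * e i t) (\<lambda>i. \<sigma>) N T
     - ( - sqrt ((real T - real T / real N) / 2)
         - 1 / sqrt (2 * real N) * (1 / sqrt (real N * real T) *
           (\<Sum>i=1..N. \<Sum>t=1..T. (\<sigma> * e i t)^2 / \<sigma>^2 - 1)))
   = aco N T * (\<Sum>i=1..N. \<Sum>t=1..T. (e i t)^2 - 1)
     + bco N T * (\<Sum>t=1..T. \<Sum>i=2..N. \<Sum>j=1..i-1. e i t * e j t)"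
proof -
  define k where "k = sqrt (2 / (real T * real N * (real N - 1)))"
  define m where "m t = (\<Sum>i=1..N. e i t) / real N" for t
  define r where "r i t = e i t - m t" for i t
  define L where "L t = (\<Sum>i=1..N. e i t)" for t
  define E2 where "E2 t = (\<Sum>i=1..N. (e i t)^2)" for t
  have Npos: "real N > 0" using N by simp
  have N1: "1 \<le> N" using N by simp
  have T2: "sqrt (real T * 2) > 0" "sqrt (2 * real T) > 0" using T by auto
  have res: "resid (\<lambda>i t. \<tau> t + \<sigma> * e i t) N i t = \<sigma> * r i t" for i t
  proof -
    have "xsec_mean (\<lambda>i t. \<tau> t + \<sigma> * e i t) N t = \<tau> t + \<sigma> * m t"
      using Npos unfolding xsec_mean_def m_def
      by (simp add: sum.distrib sum_distrib_left[symmetric] field_simps)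
    then show ?thesis unfolding resid_def r_def by (simp add: algebra_simps)
  qed
  have "CD_stat (\<lambda>i t. \<tau> t + \<sigma> * e i t) (\<lambda>i. \<sigma>) N T
      = k * (\<Sum>i=2..N. \<Sum>j=1..i-1. \<Sum>t=1..T. r i t * r j t)"
    unfolding CD_stat_def k_def res using \<sigma> by (simp add: power2_eq_square)
  also have "(\<Sum>i=2..N. \<Sum>j=1..i-1. \<Sum>t=1..T. r i t * r j t) = (\<Sum>t=1..T. \<Sum>i=2..N. \<Sum>j=1..i-1. r i t * r j t)"
    by (subst sum.swap, rule sum.cong[OF refl], rule sum.swap)
  also have "\<dots> = (\<Sum>t=1..T. - (E2 t - (L t)^2 / real N) / 2)"
  proof (rule sum.cong[OF refl])
    fix t
    have sr: "(\<Sum>i=1..N. r i t) = 0"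
      using Npos unfolding r_def m_def by (simp add: sum_subtractf)
    have sr2: "(\<Sum>i=1..N. (r i t)^2) = E2 t - (L t)^2 / real N"
      using Npos unfolding r_def m_def E2_def L_def
      by (simp add: power2_diff sum.distrib sum_subtractf sum_distrib_left[symmetric] sum_divide_distrib[symmetric] field_simps power2_eq_square sum_distrib_right[symmetric])
    show "(\<Sum>i=2..N. \<Sum>j=1..i-1. r i t * r j t) = - (E2 t - (L t)^2 / real N) / 2"
      unfolding pairsum sr sr2 by simp
  qed
  finally have cd: "CD_stat (\<lambda>i t. \<tau> t + \<sigma> * e i t) (\<lambda>i. \<sigma>) N T = k * (\<Sum>t=1..T. - (E2 t - (L t)^2 / real N) / 2)" .
  have q: "(\<Sum>t=1..T. \<Sum>i=2..N. \<Sum>j=1..i-1. e i t * e j t) = (\<Sum>t=1..T. ((L t)^2 - E2 t) / 2)"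
    unfolding L_def E2_def pairsum by simp
  have sq: "(\<Sum>i=1..N. \<Sum>t=1..T. (\<sigma> * e i t)^2 / \<sigma>^2 - 1) = (\<Sum>t=1..T. E2 t) - real N * real T"
    using \<sigma> unfolding E2_def
    by (simp add: sum_subtractf power_mult_distrib) (rule sum.swap)
  have sq2: "(\<Sum>i=1..N. \<Sum>t=1..T. (e i t)^2 - 1) = (\<Sum>t=1..T. E2 t) - real N * real T"
    unfolding E2_def by (simp add: sum_subtractf) (rule sum.swap)
  show ?thesis
    unfolding cd q sq sq2 s1[OF N T] s2[OF N1 T] aco_def bco_def k_def[symmetric]
    using N Npos T2
    apply (simp add: sum_divide_distrib[symmetric] sum_subtractf sum_negf)
    apply (simp add: field_simps)
    done
qed

lemma sqrt_ge_self01: "0 \<le> (x::real) \<Longrightarrow> x \<le> 1 \<Longrightarrow> x \<le> sqrt x"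
proof -
  assume x: "0 \<le> x" "x \<le> 1"
  have "sqrt x \<le> 1" using x by simp
  then have "sqrt x * sqrt x \<le> sqrt x" using x by (intro mult_left_le) auto
  moreover have "sqrt x * sqrt x = x" using x by simp
  ultimately show ?thesis by linarith
qed

lemma aco_bound:
  assumes N: "2 \<le> N" and T: "1 \<le> T"
  shows "(aco N T)^2 \<le> 1 / (2 * real T * real N ^ 4)"
proof -
  define u where "u = sqrt ((real N - 1) / real N)"
  have Np: "real N \<ge> 2" "real T \<ge> 1" using N T by auto
  have T2: "sqrt (2 * real T) > 0" using T by simp
  have ku: "sqrt (2 / (real T * real N * (real N - 1))) * (real N - 1) / (2 * real N)
      = u / (real N * sqrt (2 * real T))"
  proof -
    have "sqrt (2 / (real T * real N * (real N - 1))) * ((real N - 1) * sqrt (2 * real T) / 2)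
        = sqrt (2 / (real T * real N * (real N - 1)) * ((real N - 1) * sqrt (2 * real T) / 2)^2)"
      using Np T2 by (simp only: real_sqrt_mult real_sqrt_abs abs_of_nonneg[of "(real N - 1) * sqrt (2 * real T) / 2"]
          divide_nonneg_pos mult_nonneg_nonneg, simp)
    also have "2 / (real T * real N * (real N - 1)) * ((real N - 1) * sqrt (2 * real T) / 2)^2
        = (real N - 1) / real N"
      using Np by (simp add: power_mult_distrib field_simps power2_eq_square)
    finally have "sqrt (2 / (real T * real N * (real N - 1))) * ((real N - 1) * sqrt (2 * real T) / 2) = u"
      unfolding u_def .
    then show ?thesis using Np T2 by (simp add: field_simps)
  qed
  have a: "aco N T = (1 - u) / (real N * sqrt (2 * real T))"
    unfolding aco_def ku by (simp add: diff_divide_distrib)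
  have u1: "u \<le> 1" unfolding u_def using Np by simp
  have u2: "(real N - 1) / real N \<le> u" unfolding u_def using Np by (intro sqrt_ge_self01) auto
  have "(real N - 1) / real N = 1 - 1 / real N" using Np by (simp add: field_simps)
  then have b: "0 \<le> 1 - u" "1 - u \<le> 1 / real N" using u1 u2 by auto
  have "(1 - u)^2 \<le> (1 / real N)^2" using b by (intro power_mono) auto
  then have "(aco N T)^2 \<le> (1 / real N)^2 / (real N * sqrt (2 * real T))^2"
    unfolding a power_divide using T2 Np by (intro divide_right_mono) auto
  also have "\<dots> = 1 / (2 * real T * real N ^ 4)"
    using Np by (simp add: power_mult_distrib field_simps)
  finally show ?thesis .
qed

lemma bco_sq:
  assumes N: "2 \<le> N" and T: "1 \<le> T"
  shows "(bco N T)^2 = 2 / (real T * real N * (real N - 1) * (real N)^2)"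
  using assms unfolding bco_def by (simp add: power_divide)

lemma pow_le_1_8: "k \<le> 8 \<Longrightarrow> \<bar>(y::real)^k\<bar> \<le> 1 + y^8"
proof (cases "\<bar>y\<bar> \<le> 1")
  case True
  then have "\<bar>y\<bar>^k \<le> 1" by (simp add: power_le_one)
  moreover have "0 \<le> y^8" by (metis even_numeral zero_le_even_power)
  ultimately show ?thesis unfolding power_abs by linarith
next
  case False
  assume k: "k \<le> 8"
  then have "\<bar>y\<bar>^k \<le> \<bar>y\<bar>^8" using False by (intro power_increasing) auto
  also have "\<bar>y\<bar>^8 = y^8" by (simp add: power_abs[symmetric] zero_le_even_power)
  finally show ?thesis by (simp add: power_abs)
qed

lemma abs3_le: "\<bar>(b::real) * c * d\<bar> \<le> b^2 + c^4 + d^4"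
proof -
  have "\<bar>b * (c * d)\<bar> \<le> b^2 + (c*d)^2" by (rule abs_prod_le_sq)
  moreover have "(c*d)^2 \<le> \<bar>c^2 * d^2\<bar>" by (simp add: power_mult_distrib)
  moreover have "\<bar>c^2 * d^2\<bar> \<le> (c^2)^2 + (d^2)^2" by (rule abs_prod_le_sq)
  ultimately show ?thesis by (simp add: mult.assoc power_mult[symmetric])
qed

lemma sq_sum_le: "((x::real) + y)^2 \<le> 2 * x^2 + 2 * y^2"
proof -
  have "0 \<le> (x - y)^2" by simp
  then show ?thesis by (simp add: power2_diff power2_sum)
qed

locale panel = prob_space M for M :: "'a measure" +
  fixes \<eta> :: "nat \<Rightarrow> nat \<Rightarrow> 'a \<Rightarrow> real"
  assumes meas_eta[measurable]: "\<And>i t. \<eta> i t \<in> borel_measurable M"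
    and indep: "indep_vars (\<lambda>_. borel) (\<lambda>p. \<eta> (fst p) (snd p)) UNIV"
    and ident: "\<And>i t. distr M borel (\<eta> i t) = distr M borel (\<eta> 0 0)"
    and mean0: "integral\<^sup>L M (\<eta> 0 0) = 0"
    and var1: "integral\<^sup>L M (\<lambda>x. (\<eta> 0 0 x)^2) = 1"
    and int8: "integrable M (\<lambda>x. (\<eta> 0 0 x)^8)"
begin

lemma transfer:
  fixes g :: "real \<Rightarrow> real"
  assumes g[measurable]: "g \<in> borel_measurable borel" and ig: "integrable M (\<lambda>x. g (\<eta> 0 0 x))"
  shows "integrable M (\<lambda>x. g (\<eta> i t x))" "expectation (\<lambda>x. g (\<eta> i t x)) = expectation (\<lambda>x. g (\<eta> 0 0 x))"
proof -
  have e1: "integrable (distr M borel (\<eta> j s)) g \<longleftrightarrow> integrable M (\<lambda>x. g (\<eta> j s x))" for j s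
    by (rule integrable_distr_eq[OF meas_eta g])
  have e2: "integral\<^sup>L (distr M borel (\<eta> j s)) g = expectation (\<lambda>x. g (\<eta> j s x))" for j s
    by (rule integral_distr[OF meas_eta g])
  show "integrable M (\<lambda>x. g (\<eta> i t x))" using ig unfolding e1[symmetric] ident[of i t] .
  show "expectation (\<lambda>x. g (\<eta> i t x)) = expectation (\<lambda>x. g (\<eta> 0 0 x))"
    unfolding e2[symmetric] ident[of i t] ..
qed

lemma int_pow0: "k \<le> 8 \<Longrightarrow> integrable M (\<lambda>x. (\<eta> 0 0 x)^k)"
  apply (rule Bochner_Integration.integrable_bound[where f="\<lambda>x. 1 + (\<eta> 0 0 x)^8"])
  using int8 apply simp
  apply measurable
  by (auto intro!: AE_I2 pow_le_1_8)

lemma int_pow: "k \<le> 8 \<Longrightarrow> integrable M (\<lambda>x. (\<eta> i t x)^k)"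
  using transfer(1)[of "\<lambda>y. y^k", OF _ int_pow0] by simp

lemma E_eta: "expectation (\<eta> i t) = 0"
proof -
  have "expectation (\<lambda>x. (\<eta> i t x)^1) = expectation (\<lambda>x. (\<eta> 0 0 x)^1)"
    by (rule transfer(2)) (use int_pow0[of 1] in auto)
  then show ?thesis using mean0 by simp
qed

lemma E_eta2: "expectation (\<lambda>x. (\<eta> i t x)^2) = 1"
proof -
  have "expectation (\<lambda>x. (\<eta> i t x)^2) = expectation (\<lambda>x. (\<eta> 0 0 x)^2)"
    by (rule transfer(2)) (auto intro: int_pow0)
  then show ?thesis using var1 by simp
qed

definition V where "V = expectation (\<lambda>x. ((\<eta> 0 0 x)^2 - 1)^2)"

lemma int_V: "integrable M (\<lambda>x. ((\<eta> 0 0 x)^2 - 1)^2)"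
proof -
  have "(\<lambda>x. ((\<eta> 0 0 x)^2 - 1)^2) = (\<lambda>x. (\<eta> 0 0 x)^4 - 2 * (\<eta> 0 0 x)^2 + 1)"
    by (simp add: power2_diff power_mult[symmetric] algebra_simps)
  then show ?thesis using int_pow0[of 4] int_pow0[of 2] by simp
qed

lemma V_nonneg: "0 \<le> V" unfolding V_def by simp

end

context panel begin

abbreviation X :: "nat \<times> nat \<Rightarrow> 'a \<Rightarrow> real" where "X p \<equiv> \<eta> (fst p) (snd p)"

lemma indep2:
  fixes f g :: "real \<Rightarrow> real"
  assumes pq: "p \<noteq> q" and [measurable]: "f \<in> borel_measurable borel" "g \<in> borel_measurable borel"
    and i1: "integrable M (\<lambda>\<omega>. f (X p \<omega>))" and i2: "integrable M (\<lambda>\<omega>. g (X q \<omega>))"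
  shows "expectation (\<lambda>\<omega>. f (X p \<omega>) * g (X q \<omega>)) = expectation (\<lambda>\<omega>. f (X p \<omega>)) * expectation (\<lambda>\<omega>. g (X q \<omega>))"
proof -
  have h: "(\<lambda>v. g (v q)) \<in> borel_measurable (PiM {q} (\<lambda>_. borel))" by measurable
  have "expectation (\<lambda>\<omega>. f (X p \<omega>) * (\<lambda>v. g (v q)) (\<lambda>q'\<in>{q}. X q' \<omega>)) =
        expectation (\<lambda>\<omega>. f (X p \<omega>)) * expectation (\<lambda>\<omega>. (\<lambda>v. g (v q)) (\<lambda>q'\<in>{q}. X q' \<omega>))"
    by (rule G1[OF indep _ _ h]) (use pq i1 i2 in auto)
  then show ?thesis by simp
qed

lemma indep3:
  assumes p: "p \<notin> {b, c, d}"
  shows "expectation (\<lambda>\<omega>. X p \<omega> * (X b \<omega> * X c \<omega> * X d \<omega>)) = 0"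
proof -
  have h: "(\<lambda>v::nat\<times>nat\<Rightarrow>real. v b * v c * v d) \<in> borel_measurable (PiM {b,c,d} (\<lambda>_. borel))"
  proof -
    have m: "(\<lambda>v::nat\<times>nat\<Rightarrow>real. v z) \<in> borel_measurable (PiM {b,c,d} (\<lambda>_. borel))" if "z \<in> {b,c,d}" for z :: "nat \<times> nat"
      using measurable_component_singleton[OF that, of "\<lambda>_. borel"] by simp
    have mb: "(\<lambda>v::nat\<times>nat\<Rightarrow>real. v b) \<in> borel_measurable (PiM {b,c,d} (\<lambda>_. borel))" by (rule m) auto
    have mc: "(\<lambda>v::nat\<times>nat\<Rightarrow>real. v c) \<in> borel_measurable (PiM {b,c,d} (\<lambda>_. borel))" by (rule m) auto
    have md: "(\<lambda>v::nat\<times>nat\<Rightarrow>real. v d) \<in> borel_measurable (PiM {b,c,d} (\<lambda>_. borel))" by (rule m) auto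
    show ?thesis by (rule borel_measurable_times[OF borel_measurable_times[OF mb mc] md])
  qed
  have i3: "integrable M (\<lambda>\<omega>. X b \<omega> * X c \<omega> * X d \<omega>)"
    apply (rule Bochner_Integration.integrable_bound[where f="\<lambda>x. (X b x)^2 + (X c x)^4 + (X d x)^4"])
    using int_pow[of 2] int_pow[of 4] apply simp
    apply measurable
    by (auto intro!: AE_I2 abs3_le)
  have "expectation (\<lambda>\<omega>. (\<lambda>y. y) (X p \<omega>) * (\<lambda>v. v b * v c * v d) (\<lambda>q'\<in>{b,c,d}. X q' \<omega>)) =
        expectation (\<lambda>\<omega>. (\<lambda>y. y) (X p \<omega>)) * expectation (\<lambda>\<omega>. (\<lambda>v. v b * v c * v d) (\<lambda>q'\<in>{b,c,d}. X q' \<omega>))"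
    by (rule G1[OF indep _ _ h]) (use p i3 int_pow[of 1] in auto)
  then show ?thesis using E_eta by simp
qed

definition Ssum :: "nat \<Rightarrow> nat \<Rightarrow> 'a \<Rightarrow> real" where
  "Ssum N T x = (\<Sum>i=1..N. \<Sum>t=1..T. (\<eta> i t x)^2 - 1)"

lemma S_moment:
  shows "integrable M (\<lambda>x. (Ssum N T x)^2)"
    and "expectation (\<lambda>x. (Ssum N T x)^2) = real N * real T * V"
proof -
  let ?K = "{1..N} \<times> {1..T}"
  let ?Z = "\<lambda>p x. (X p x)^2 - 1"
  have eq: "Ssum N T x = (\<Sum>p\<in>?K. ?Z p x)" for x
    unfolding Ssum_def sum.cartesian_product by (rule sum.cong) auto
  have sqi: "integrable M (\<lambda>x. (?Z p x)^2)" for p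
    using transfer(1)[of "\<lambda>y. (y^2 - 1)^2", OF _ int_V] by simp
  have sqe: "expectation (\<lambda>x. (?Z p x)^2) = V" for p
    using transfer(2)[of "\<lambda>y. (y^2 - 1)^2", OF _ int_V] unfolding V_def by simp
  have z0: "expectation (?Z p) = 0" for p
    using E_eta2 int_pow[of 2] prob_space by simp
  have orth: "expectation (\<lambda>x. ?Z p x * ?Z q x) = 0" if "p \<noteq> q" for p q
  proof -
    have "expectation (\<lambda>x. ?Z p x * ?Z q x) = expectation (?Z p) * expectation (?Z q)"
      by (rule indep2[OF that, of "\<lambda>y. y^2 - 1" "\<lambda>y. y^2 - 1"]) (use int_pow[of 2] in auto)
    then show ?thesis using z0 by simp
  qed
  have "integrable M (\<lambda>x. (\<Sum>p\<in>?K. ?Z p x)^2)"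
    by (rule orth_sum(1)) (auto intro: sqi orth)
  then show "integrable M (\<lambda>x. (Ssum N T x)^2)" unfolding eq .
  have "expectation (\<lambda>x. (\<Sum>p\<in>?K. ?Z p x)^2) = (\<Sum>p\<in>?K. expectation (\<lambda>x. (?Z p x)^2))"
    by (rule orth_sum(2)) (auto intro: sqi orth)
  also have "\<dots> = real N * real T * V" unfolding sqe by simp
  finally show "expectation (\<lambda>x. (Ssum N T x)^2) = real N * real T * V" unfolding eq .
qed


definition Qsum :: "nat \<Rightarrow> nat \<Rightarrow> 'a \<Rightarrow> real" where
  "Qsum N T x = (\<Sum>t=1..T. \<Sum>i=2..N. \<Sum>j=1..i-1. \<eta> i t x * \<eta> j t x)"

definition KQ :: "nat \<Rightarrow> nat \<Rightarrow> (nat \<times> nat \<times> nat) set" where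
  "KQ N T = Sigma {1..T} (\<lambda>t. Sigma {2..N} (\<lambda>i. {1..i-1}))"

lemma KQ_card: "card (KQ N T) \<le> T * (N * N)"
proof -
  have "KQ N T \<subseteq> {1..T} \<times> ({1..N} \<times> {1..N})" unfolding KQ_def by auto
  then have "card (KQ N T) \<le> card ({1..T} \<times> ({1..N} \<times> {1..N}))" by (intro card_mono) auto
  then show ?thesis by (simp add: card_cartesian_product)
qed

lemma Q_moment:
  shows "integrable M (\<lambda>x. (Qsum N T x)^2)"
    and "expectation (\<lambda>x. (Qsum N T x)^2) = real (card (KQ N T))"
proof -
  let ?K = "KQ N T"
  define Z where "Z k x = \<eta> (fst (snd k)) (fst k) x * \<eta> (snd (snd k)) (fst k) x" for k x
  have fin: "finite ?K" unfolding KQ_def by auto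
  have eq: "Qsum N T x = (\<Sum>k\<in>?K. Z k x)" for x
  proof -
    have "(\<Sum>k\<in>?K. Z k x) = (\<Sum>(t,p)\<in>?K. Z (t,p) x)" by simp
    also have "\<dots> = (\<Sum>t=1..T. \<Sum>p\<in>Sigma {2..N} (\<lambda>i. {1..i-1}). Z (t,p) x)"
      unfolding KQ_def by (rule sum.Sigma[symmetric]) auto
    also have "\<dots> = (\<Sum>t=1..T. \<Sum>i=2..N. \<Sum>j=1..i-1. Z (t,i,j) x)"
    proof (rule sum.cong[OF refl])
      fix t
      have "(\<Sum>p\<in>Sigma {2..N} (\<lambda>i. {1..i-1}). Z (t,p) x) = (\<Sum>(i,j)\<in>Sigma {2..N} (\<lambda>i. {1..i-1}). Z (t,i,j) x)"
        by (simp add: split_def)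
      also have "\<dots> = (\<Sum>i=2..N. \<Sum>j=1..i-1. Z (t,i,j) x)"
        by (rule sum.Sigma[symmetric]) auto
      finally show "(\<Sum>p\<in>Sigma {2..N} (\<lambda>i. {1..i-1}). Z (t,p) x) = (\<Sum>i=2..N. \<Sum>j=1..i-1. Z (t,i,j) x)" .
    qed
    finally show ?thesis unfolding Qsum_def Z_def by simp
  qed
  have Zm[measurable]: "Z k \<in> borel_measurable M" for k unfolding Z_def by measurable
  have sqi: "integrable M (\<lambda>x. (Z k x)^2)" for k
  proof -
    have "integrable M (\<lambda>x. (\<eta> (fst (snd k)) (fst k) x)^2 * (\<eta> (snd (snd k)) (fst k) x)^2)"
      by (rule integrable_prod_sq) (use int_pow[of 4] in \<open>auto simp: power_mult[symmetric]\<close>)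
    then show ?thesis unfolding Z_def by (simp add: power_mult_distrib)
  qed
  have sqe: "expectation (\<lambda>x. (Z k x)^2) = 1" if kK: "k \<in> ?K" for k
  proof -
    obtain t i j where k: "k = (t, i, j)" and ji: "j < i" using kK unfolding KQ_def by auto
    have "expectation (\<lambda>x. (X (i,t) x)^2 * (X (j,t) x)^2) = expectation (\<lambda>x. (X (i,t) x)^2) * expectation (\<lambda>x. (X (j,t) x)^2)"
      by (rule indep2[of "(i,t)" "(j,t)" "\<lambda>y. y^2" "\<lambda>y. y^2"]) (use ji int_pow[of 2] in auto)
    then show ?thesis unfolding Z_def k using E_eta2 by (simp add: power_mult_distrib)
  qed
  have orth: "expectation (\<lambda>x. Z k x * Z l x) = 0" if kl: "k \<in> ?K" "l \<in> ?K" "k \<noteq> l" for k l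
  proof -
    obtain t i j where k: "k = (t, i, j)" and ji: "j < i" using kl(1) unfolding KQ_def by auto
    obtain s i' j' where l: "l = (s, i', j')" and ji': "j' < i'" using kl(2) unfolding KQ_def by auto
    have ZZ: "Z k x * Z l x = X (i,t) x * X (j,t) x * (X (i',s) x * X (j',s) x)" for x
      unfolding Z_def k l by simp
    show ?thesis
    proof (cases "(i,t) \<notin> {(j,t), (i',s), (j',s)}")
      case True
      have "expectation (\<lambda>x. X (i,t) x * (X (j,t) x * X (i',s) x * X (j',s) x)) = 0"
        by (rule indep3[OF True])
      then show ?thesis unfolding ZZ by (simp add: ac_simps)
    next
      case False
      show ?thesis
      proof (cases "(j,t) \<notin> {(i,t), (i',s), (j',s)}")
        case True
        have "expectation (\<lambda>x. X (j,t) x * (X (i,t) x * X (i',s) x * X (j',s) x)) = 0"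
          by (rule indep3[OF True])
        then show ?thesis unfolding ZZ by (simp add: ac_simps)
      next
        case False2: False
        have False using False False2 ji ji' kl(3) k l by auto
        then show ?thesis ..
      qed
    qed
  qed
  have "integrable M (\<lambda>x. (\<Sum>k\<in>?K. Z k x)^2)"
    by (rule orth_sum(1)[OF fin]) (auto intro: sqi orth)
  then show "integrable M (\<lambda>x. (Qsum N T x)^2)" unfolding eq .
  have "expectation (\<lambda>x. (\<Sum>k\<in>?K. Z k x)^2) = (\<Sum>k\<in>?K. expectation (\<lambda>x. (Z k x)^2))"
    by (rule orth_sum(2)[OF fin]) (auto intro: sqi orth)
  also have "\<dots> = real (card ?K)" using sqe by simp
  finally show "expectation (\<lambda>x. (Qsum N T x)^2) = real (card (KQ N T))" unfolding eq .
qed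


lemma main_bound:
  assumes N: "2 \<le> N" and T: "1 \<le> T" and e: "0 < e"
  shows "measure M {x\<in>space M. e < sqrt (real N) * \<bar>aco N T * Ssum N T x + bco N T * Qsum N T x\<bar>}
           \<le> (V + 4) / (e^2 * (real N - 1))"
proof -
  define a where "a = aco N T"
  define b where "b = bco N T"
  define u where "u x = 2 * real N * (a^2 * (Ssum N T x)^2 + b^2 * (Qsum N T x)^2)" for x
  have Nr: "real N \<ge> 2" "real T \<ge> 1" using N T by auto
  have ui: "integrable M u" unfolding u_def
    using S_moment(1)[of N T] Q_moment(1)[of N T] by auto
  have Eu: "expectation u = 2 * real N * (a^2 * (real N * real T * V) + b^2 * real (card (KQ N T)))"
    unfolding u_def using S_moment[of N T] Q_moment[of N T] by simp
  have a2: "a^2 \<le> 1 / (2 * real T * real N ^ 4)" unfolding a_def by (rule aco_bound[OF N T])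
  have b2: "b^2 = 2 / (real T * real N * (real N - 1) * (real N)^2)" unfolding b_def by (rule bco_sq[OF N T])
  have c: "real (card (KQ N T)) \<le> real T * (real N * real N)"
    using KQ_card[of N T] by (metis of_nat_le_iff of_nat_mult)
  have t1: "2 * real N * (a^2 * (real N * real T * V)) \<le> V / (real N - 1)"
  proof -
    have "2 * real N * (a^2 * (real N * real T * V)) = a^2 * (2 * real N * real N * real T * V)" by simp
    also have "\<dots> \<le> 1 / (2 * real T * real N ^ 4) * (2 * real N * real N * real T * V)"
      using a2 V_nonneg Nr by (intro mult_right_mono) auto
    also have "\<dots> = V / (real N)^2" using Nr by (simp add: field_simps power_def)
    also have "\<dots> \<le> V / (real N - 1)"
    proof -
      have "real N * 1 \<le> real N * real N" using Nr by (intro mult_left_mono) auto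
      then have n1: "real N - 1 \<le> (real N)^2" by (simp add: power2_eq_square)
      have n2: "0 < (real N)^2 * (real N - 1)" using Nr by simp
      show ?thesis using V_nonneg n1 n2 by (intro divide_left_mono) auto
    qed
    finally show ?thesis .
  qed
  have t2: "2 * real N * (b^2 * real (card (KQ N T))) \<le> 4 / (real N - 1)"
  proof -
    have "2 * real N * (b^2 * real (card (KQ N T))) \<le> 2 * real N * (b^2 * (real T * (real N * real N)))"
      using c Nr by (intro mult_left_mono) auto
    also have "\<dots> = 4 / (real N - 1)" unfolding b2 using Nr by (simp add: field_simps power2_eq_square)
    finally show ?thesis .
  qed
  have EuB: "expectation u \<le> (V + 4) / (real N - 1)"
    unfolding Eu using t1 t2 by (simp add: distrib_left add_divide_distrib)
  have sub: "{x\<in>space M. e < sqrt (real N) * \<bar>a * Ssum N T x + b * Qsum N T x\<bar>} \<subseteq> {x\<in>space M. e^2 \<le> u x}"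
  proof safe
    fix x assume x: "x \<in> space M" and lt: "e < sqrt (real N) * \<bar>a * Ssum N T x + b * Qsum N T x\<bar>"
    have "e^2 \<le> (sqrt (real N) * \<bar>a * Ssum N T x + b * Qsum N T x\<bar>)^2"
      using lt e by (intro power_mono) auto
    also have "\<dots> = real N * (a * Ssum N T x + b * Qsum N T x)^2"
      by (simp add: power_mult_distrib)
    also have "\<dots> \<le> real N * (2 * (a * Ssum N T x)^2 + 2 * (b * Qsum N T x)^2)"
      by (intro mult_left_mono sq_sum_le) auto
    also have "\<dots> = u x" unfolding u_def by (simp add: power_mult_distrib algebra_simps)
    finally show "e^2 \<le> u x" .
  qed
  have um[measurable]: "u \<in> borel_measurable M" using ui by auto
  have "measure M {x\<in>space M. e < sqrt (real N) * \<bar>a * Ssum N T x + b * Qsum N T x\<bar>} \<le> measure M {x\<in>space M. e^2 \<le> u x}"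
    by (rule finite_measure_mono[OF sub]) measurable
  also have "\<dots> \<le> expectation u / e^2"
    by (rule integral_Markov_inequality_measure[OF ui, where A="space M"]) (use e in \<open>auto simp: u_def\<close>)
  also have "\<dots> \<le> ((V + 4) / (real N - 1)) / e^2"
    using EuB e by (intro divide_right_mono) auto
  also have "\<dots> = (V + 4) / (e^2 * (real N - 1))" by (simp add: field_simps)
  finally show ?thesis unfolding a_def b_def .
qed

end

theorem corollary1:
  fixes M :: "'a measure"
    and \<eta> :: "nat \<Rightarrow> nat \<Rightarrow> 'a \<Rightarrow> real"
    and sig :: "nat \<Rightarrow> 'a \<Rightarrow> real"
    and \<tau> :: "nat \<Rightarrow> real"
    and \<sigma> \<delta> B :: real
  assumes prob: "prob_space M"
    and meas_eta: "\<And>i t. \<eta> i t \<in> borel_measurable M"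
    and indep: "prob_space.indep_vars M (\<lambda>_. borel) (\<lambda>p. \<eta> (fst p) (snd p)) UNIV"
    and ident: "\<And>i t. distr M borel (\<eta> i t) = distr M borel (\<eta> 0 0)"
    and int1: "integrable M (\<eta> 0 0)"
    and mean0: "integral\<^sup>L M (\<eta> 0 0) = 0"
    and var1: "integral\<^sup>L M (\<lambda>x. (\<eta> 0 0 x)^2) = 1"
    and int8: "integrable M (\<lambda>x. (\<eta> 0 0 x)^8)"
    and mom8: "integral\<^sup>L M (\<lambda>x. (\<eta> 0 0 x)^8) < B"
    and delta_pos: "0 < \<delta>"
    and meas_sig: "\<And>i. sig i \<in> borel_measurable M"
    and sig_bounds: "\<And>i x. x \<in> space M \<Longrightarrow> \<delta> \<le> sig i x \<and> sig i x \<le> B"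
    and joint_indep: "prob_space.indep_vars M (\<lambda>_. borel)
                      (\<lambda>k. case k of Inl i \<Rightarrow> sig i | Inr p \<Rightarrow> \<eta> (fst p) (snd p))
                      (UNIV :: (nat + nat \<times> nat) set)"
    and sig_ident: "\<And>i. distr M borel (sig i) = distr M borel (sig 0)"
    and sig_const: "\<And>i. AE x in M. sig i x = \<sigma>"
  shows "\<forall>e>0. ((\<lambda>(N, T). measure M {x \<in> space M.
             sqrt (real N) *
             \<bar>CD_stat (\<lambda>i t. \<tau> t + sig i x * \<eta> i t x) (\<lambda>i. sig i x) N T
              - ( - sqrt ((real T - real T / real N) / 2)
                  - 1 / sqrt (2 * real N) *
                    (1 / sqrt (real N * real T) *
                     (\<Sum>i=1..N. \<Sum>t=1..T. (sig i x * \<eta> i t x)^2 / \<sigma>^2 - 1)))\<bar> > e})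
           \<longlongrightarrow> 0) (sequentially \<times>\<^sub>F sequentially)"
proof (intro allI impI)
  fix e :: real assume e: "0 < e"
  interpret P: panel M \<eta>
    by (rule panel.intro[OF prob], rule panel_axioms.intro) (use meas_eta indep ident mean0 var1 int8 in auto)
  have AEall: "AE x in M. \<forall>i. sig i x = \<sigma>" using sig_const by (simp add: AE_all_countable)
  have "AE x in M. \<delta> \<le> \<sigma>"
    using sig_const[of 0]
  proof (rule AE_mp)
    show "AE x in M. sig 0 x = \<sigma> \<longrightarrow> \<delta> \<le> \<sigma>"
      by (rule AE_I2) (use sig_bounds in force)
  qed
  then have "\<delta> \<le> \<sigma>" by (simp only: P.AE_const)
  then have sig_pos: "0 < \<sigma>" using delta_pos by linarith
  define C where "C = (P.V + 4) / e^2"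
  have C0: "0 \<le> C" unfolding C_def using P.V_nonneg by simp
  define g where "g N = C / (real N - 1)" for N :: nat
  define F where "F = (\<lambda>(N::nat, T::nat). measure M {x \<in> space M.
             sqrt (real N) *
             \<bar>CD_stat (\<lambda>i t. \<tau> t + sig i x * \<eta> i t x) (\<lambda>i. sig i x) N T
              - ( - sqrt ((real T - real T / real N) / 2)
                  - 1 / sqrt (2 * real N) *
                    (1 / sqrt (real N * real T) *
                     (\<Sum>i=1..N. \<Sum>t=1..T. (sig i x * \<eta> i t x)^2 / \<sigma>^2 - 1)))\<bar> > e})"
  have bound: "F (N, T) \<le> g N" if N: "2 \<le> N" and T: "1 \<le> T" for N T
  proof -
    let ?A = "{x \<in> space M.
             sqrt (real N) *
             \<bar>CD_stat (\<lambda>i t. \<tau> t + sig i x * \<eta> i t x) (\<lambda>i. sig i x) N T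
              - ( - sqrt ((real T - real T / real N) / 2)
                  - 1 / sqrt (2 * real N) *
                    (1 / sqrt (real N * real T) *
                     (\<Sum>i=1..N. \<Sum>t=1..T. (sig i x * \<eta> i t x)^2 / \<sigma>^2 - 1)))\<bar> > e}"
    let ?B = "{x\<in>space M. e < sqrt (real N) * \<bar>aco N T * P.Ssum N T x + bco N T * P.Qsum N T x\<bar>}"
    have Bs: "?B \<in> sets M" unfolding P.Ssum_def P.Qsum_def by measurable
    have gN: "g N = (P.V + 4) / (e^2 * (real N - 1))" unfolding g_def C_def by simp
    have "measure M ?A \<le> measure M ?B"
    proof (cases "?A \<in> sets M")
      case False
      show ?thesis unfolding measure_notin_sets[OF False] by (rule measure_nonneg)
    next
      case True
      show ?thesis
      proof (rule P.finite_measure_mono_AE[OF _ Bs])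
        show "AE x in M. x \<in> ?A \<longrightarrow> x \<in> ?B"
          using AEall
        proof (rule AE_mp, intro AE_I2 impI)
          fix x assume x: "x \<in> space M" and s: "\<forall>i. sig i x = \<sigma>" and xA: "x \<in> ?A"
          have e1: "(\<lambda>i t. \<tau> t + sig i x * \<eta> i t x) = (\<lambda>i t. \<tau> t + \<sigma> * \<eta> i t x)" using s by simp
          have e2: "(\<lambda>i. sig i x) = (\<lambda>i. \<sigma>)" using s by simp
          have e3: "(\<Sum>i=1..N. \<Sum>t=1..T. (sig i x * \<eta> i t x)^2 / \<sigma>^2 - 1)
                  = (\<Sum>i=1..N. \<Sum>t=1..T. (\<sigma> * \<eta> i t x)^2 / \<sigma>^2 - 1)" using s by simp
          have eqn: "CD_stat (\<lambda>i t. \<tau> t + sig i x * \<eta> i t x) (\<lambda>i. sig i x) N T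
              - ( - sqrt ((real T - real T / real N) / 2)
                  - 1 / sqrt (2 * real N) *
                    (1 / sqrt (real N * real T) *
                     (\<Sum>i=1..N. \<Sum>t=1..T. (sig i x * \<eta> i t x)^2 / \<sigma>^2 - 1)))
              = aco N T * P.Ssum N T x + bco N T * P.Qsum N T x"
            unfolding e1 e2 e3 P.Ssum_def P.Qsum_def
            by (rule alg[OF N T]) (use sig_pos in simp)
          have "e < sqrt (real N) *
             \<bar>CD_stat (\<lambda>i t. \<tau> t + sig i x * \<eta> i t x) (\<lambda>i. sig i x) N T
              - ( - sqrt ((real T - real T / real N) / 2)
                  - 1 / sqrt (2 * real N) *
                    (1 / sqrt (real N * real T) *
                     (\<Sum>i=1..N. \<Sum>t=1..T. (sig i x * \<eta> i t x)^2 / \<sigma>^2 - 1)))\<bar>"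
            using xA by blast
          then have "e < sqrt (real N) * \<bar>aco N T * P.Ssum N T x + bco N T * P.Qsum N T x\<bar>"
            unfolding eqn .
          then show "x \<in> ?B" using x by blast
        qed
      qed
    qed
    also have "\<dots> \<le> g N" unfolding gN by (rule P.main_bound[OF N T e])
    finally show ?thesis unfolding F_def prod.case .
  qed
  have ev: "eventually (\<lambda>p. 2 \<le> fst p \<and> 1 \<le> snd p) (sequentially \<times>\<^sub>F sequentially)"
    unfolding eventually_prod_sequentially by (rule exI[of _ 2]) auto
  have glim: "g \<longlonglongrightarrow> 0"
  proof -
    have "filterlim (\<lambda>N::nat. real N - 1) at_top sequentially" by real_asymp
    then have "filterlim (\<lambda>N::nat. real N - 1) at_infinity sequentially"
      by (rule filterlim_mono) (auto simp: at_top_le_at_infinity)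
    then show ?thesis unfolding g_def by (intro tendsto_divide_0[OF tendsto_const])
  qed
  have hlim: "((\<lambda>p. g (fst p)) \<longlongrightarrow> 0) (sequentially \<times>\<^sub>F sequentially)"
    by (rule filterlim_compose[OF glim filterlim_fst])
  have "(F \<longlongrightarrow> 0) (sequentially \<times>\<^sub>F sequentially)"
  proof (rule tendsto_sandwich[OF _ _ tendsto_const hlim])
    show "eventually (\<lambda>p. 0 \<le> F p) (sequentially \<times>\<^sub>F sequentially)"
      unfolding F_def by (intro always_eventually) auto
    show "eventually (\<lambda>p. F p \<le> g (fst p)) (sequentially \<times>\<^sub>F sequentially)"
      using ev by eventually_elim (use bound in auto)
  qed
  then show "((\<lambda>(N, T). measure M {x \<in> space M.
             sqrt (real N) *
             \<bar>CD_stat (\<lambda>i t. \<tau> t + sig i x * \<eta> i t x) (\<lambda>i. sig i x) N T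
              - ( - sqrt ((real T - real T / real N) / 2)
                  - 1 / sqrt (2 * real N) *
                    (1 / sqrt (real N * real T) *
                     (\<Sum>i=1..N. \<Sum>t=1..T. (sig i x * \<eta> i t x)^2 / \<sigma>^2 - 1)))\<bar> > e})
           \<longlongrightarrow> 0) (sequentially \<times>\<^sub>F sequentially)" unfolding F_def .
qed

end
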